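(* The weighted chromatic polynomial, viewed as an invariant of simple graphs (every vertex assigned weight $1$), is a $4$-invariant: for every simple graph $G$ and every pair of distinct vertices $a,b$ of $G$, $$W_G-W_{G'_{ab}}=W_{\widetilde G_{ab}}-W_{\widetilde G'_{ab}}.$$
   Context: A weighted graph is a simple graph with a positive integer weight assigned to each vertex. The weighted chromatic polynomial $W_G\in\mathbb{C}[q_1,q_2,\dots]$ is the unique weighted graph invariant such that: (i) the graph with one vertex of weight $n$ has $W=q_n$; (ii) $W_{G_1\sqcup G_2}=W_{G_1}W_{G_2}$ for disjoint unions; (iii) $W_G=W_{G'_e}+W_{G''_e}$ for every edge $e$, where $G'_e$ is $G$ with $e$ deleted and $G''_e$ is $G$ with $e$ contracted (the two ends of $e$ merge into one vertex whose weight is the sum of their weights, and multiple edges arising are replaced by single edges). A simple graph is regarded as a weighted graph with all weights equal to $1$. For a simple graph $G$ and vertices $a,b$: $G'_{ab}$ is obtained from $G$ by switching adjacency between $a$ and $b$ (adding the edge $ab$ if absent, removing it if present); $\widetilde G_{ab}$ is obtained from $G$ by switching the adjacency between $a$ and each vertex $v\ne a$ of $G$ adjacent to $b$; $\widetilde G'_{ab}$ is obtained by composing these two operations. *)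

theory Defs
  imports Complex_Main "HOL-Library.Poly_Mapping"
begin

text \<open>The polynomial ring C[q_1,q_2,...]: finitely supported coefficient functions on
  monomials, a monomial being a finitely supported exponent vector (nat to nat).\<close>
type_synonym wpoly = "(nat \<Rightarrow>\<^sub>0 nat) \<Rightarrow>\<^sub>0 complex"

definition qvar :: "nat \<Rightarrow> wpoly" where
  "qvar n = Poly_Mapping.single (Poly_Mapping.single n 1) 1"

text \<open>A weighted graph also has a weight function w, positive on V
  (values outside V are irrelevant).\<close>
definition simple_graph :: "nat set \<Rightarrow> nat set set \<Rightarrow> bool" where
  "simple_graph V E \<longleftrightarrow> finite V \<and>
     (\<forall>e\<in>E. \<exists>x y. e = {x, y} \<and> x \<noteq> y \<and> x \<in> V \<and> y \<in> V)"

definition weighted_graph :: "nat set \<Rightarrow> nat set set \<Rightarrow> (nat \<Rightarrow> nat) \<Rightarrow> bool" where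
  "weighted_graph V E w \<longleftrightarrow> simple_graph V E \<and> (\<forall>v\<in>V. 0 < w v)"

definition wg_iso :: "nat set \<Rightarrow> nat set set \<Rightarrow> (nat \<Rightarrow> nat) \<Rightarrow>
                      nat set \<Rightarrow> nat set set \<Rightarrow> (nat \<Rightarrow> nat) \<Rightarrow> bool" where
  "wg_iso V1 E1 w1 V2 E2 w2 \<longleftrightarrow> (\<exists>f. bij_betw f V1 V2 \<and>
     (\<forall>x\<in>V1. \<forall>y\<in>V1. {x, y} \<in> E1 \<longleftrightarrow> {f x, f y} \<in> E2) \<and>
     (\<forall>x\<in>V1. w2 (f x) = w1 x))"

text \<open>Contraction of the edge {a,b}: vertex b is merged into vertex a, which receives
  weight w a + w b; multiple edges are replaced by single edges (automatic for sets).\<close>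
definition contract_edges :: "nat set set \<Rightarrow> nat \<Rightarrow> nat \<Rightarrow> nat set set" where
  "contract_edges E a b = {e \<in> E. b \<notin> e} \<union> {{a, u} | u. {b, u} \<in> E \<and> u \<noteq> a}"

definition contract_weight :: "(nat \<Rightarrow> nat) \<Rightarrow> nat \<Rightarrow> nat \<Rightarrow> (nat \<Rightarrow> nat)" where
  "contract_weight w a b = w(a := w a + w b)"

text \<open>The defining properties of the weighted chromatic polynomial W, viewed as a function
  F V E w of weighted graphs (on vertex sets of naturals): invariance under isomorphism,
  (i) one-vertex graphs, (ii) multiplicativity on disjoint unions, (iii) deletion-contraction.\<close>
definition is_weighted_chromatic ::
    "(nat set \<Rightarrow> nat set set \<Rightarrow> (nat \<Rightarrow> nat) \<Rightarrow> wpoly) \<Rightarrow> bool" where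
  "is_weighted_chromatic F \<longleftrightarrow>
     (\<forall>V1 E1 w1 V2 E2 w2. weighted_graph V1 E1 w1 \<longrightarrow> weighted_graph V2 E2 w2 \<longrightarrow>
        wg_iso V1 E1 w1 V2 E2 w2 \<longrightarrow> F V1 E1 w1 = F V2 E2 w2) \<and>
     (\<forall>v w. 0 < w v \<longrightarrow> F {v} {} w = qvar (w v)) \<and>
     (\<forall>V1 E1 w1 V2 E2 w2. weighted_graph V1 E1 w1 \<longrightarrow> weighted_graph V2 E2 w2 \<longrightarrow>
        V1 \<inter> V2 = {} \<longrightarrow>
        F (V1 \<union> V2) (E1 \<union> E2) (\<lambda>x. if x \<in> V1 then w1 x else w2 x) = F V1 E1 w1 * F V2 E2 w2) \<and>
     (\<forall>V E w a b. weighted_graph V E w \<longrightarrow> {a, b} \<in> E \<longrightarrow>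
        F V E w = F V (E - {{a, b}}) w + F (V - {b}) (contract_edges E a b) (contract_weight w a b))"

definition switch_ab :: "nat set set \<Rightarrow> nat \<Rightarrow> nat \<Rightarrow> nat set set" where
  "switch_ab E a b = (if {a, b} \<in> E then E - {{a, b}} else insert {a, b} E)"

definition tilde_ab :: "nat set set \<Rightarrow> nat \<Rightarrow> nat \<Rightarrow> nat set set" where
  "tilde_ab E a b = (let T = {{a, v} | v. v \<noteq> a \<and> {b, v} \<in> E} in (E - T) \<union> (T - E))"

definition tilde'_ab :: "nat set set \<Rightarrow> nat \<Rightarrow> nat \<Rightarrow> nat set set" where
  "tilde'_ab E a b = switch_ab (tilde_ab E a b) a b"

abbreviation unit_weight :: "nat \<Rightarrow> nat" where
  "unit_weight \<equiv> (\<lambda>_. 1)"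

end

theory Submission
  imports Defs
begin


lemma tilde_mem: "x \<in> tilde_ab E a b \<longleftrightarrow> (x \<in> E \<longleftrightarrow> \<not> (\<exists>v. x = {a,v} \<and> v \<noteq> a \<and> {b,v} \<in> E))"
  unfolding tilde_ab_def Let_def by blast
lemma nb: assumes "a \<noteq> b" "u \<noteq> a" shows "({b,u} \<in> tilde_ab E a b) = ({b,u} \<in> E)"
proof -
  have "\<not> (\<exists>v. {b,u} = {a,v} \<and> v \<noteq> a \<and> {b,v} \<in> E)"
    using assms by (auto simp: doubleton_eq_iff)
  thus ?thesis by (simp add: tilde_mem)
qed
lemma nb2: assumes "a \<noteq> b" "u \<noteq> a" shows "({b,u} = {a,b}) = False"
  using assms by (auto simp: doubleton_eq_iff)
lemma C_lem: assumes "a \<noteq> b"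
  shows "contract_edges (insert {a,b} E) a b = contract_edges (insert {a,b} (tilde_ab E a b)) a b"
proof (rule set_eqI)
  fix x
  let ?Q = "\<exists>v. x = {a,v} \<and> v \<noteq> a \<and> {b,v} \<in> E"
  have L: "x \<in> contract_edges (insert {a,b} E) a b \<longleftrightarrow> (x \<in> E \<and> b \<notin> x) \<or> ?Q"
    unfolding contract_edges_def using assms nb2[OF assms] by auto
  have R: "x \<in> contract_edges (insert {a,b} (tilde_ab E a b)) a b \<longleftrightarrow> (x \<in> tilde_ab E a b \<and> b \<notin> x) \<or> ?Q"
    unfolding contract_edges_def using assms nb2[OF assms] nb[OF assms] by auto
  show "x \<in> contract_edges (insert {a,b} E) a b \<longleftrightarrow> x \<in> contract_edges (insert {a,b} (tilde_ab E a b)) a b"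
    unfolding L R tilde_mem by blast
qed
lemma simple_tilde: assumes "simple_graph V E" "a \<in> V" "b \<in> V" "a \<noteq> b"
  shows "simple_graph V (tilde_ab E a b)"
  unfolding simple_graph_def
proof (intro conjI ballI)
  show "finite V" using assms unfolding simple_graph_def by simp
  fix e assume e: "e \<in> tilde_ab E a b"
  show "\<exists>x y. e = {x, y} \<and> x \<noteq> y \<and> x \<in> V \<and> y \<in> V"
  proof (cases "e \<in> E")
    case True thus ?thesis using assms(1) unfolding simple_graph_def by blast
  next
    case False
    then obtain v where v: "e = {a,v}" "v \<noteq> a" "{b,v} \<in> E" using e tilde_mem by blast
    from v(3) assms(1) obtain x y where "{b,v} = {x,y}" "x \<in> V" "y \<in> V" unfolding simple_graph_def by blast
    hence "v \<in> V" by (auto simp: doubleton_eq_iff)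
    thus ?thesis using v assms by blast
  qed
qed
lemma T_lem: assumes "a \<noteq> b" "{b} \<notin> E" shows "({a,b} \<in> tilde_ab E a b) = ({a,b} \<in> E)"
  unfolding tilde_ab_def Let_def using assms by (auto simp: doubleton_eq_iff)
lemma simple_ins: assumes "simple_graph V E" "a \<in> V" "b \<in> V" "a \<noteq> b"
  shows "simple_graph V (insert {a,b} E)"
  using assms unfolding simple_graph_def by auto
lemma noloop: assumes "simple_graph V E" shows "{b} \<notin> E"
  using assms unfolding simple_graph_def by (auto simp: doubleton_eq_iff)

theorem mainTheorem1:
  fixes W :: "nat set \<Rightarrow> nat set set \<Rightarrow> (nat \<Rightarrow> nat) \<Rightarrow> wpoly"
    and V :: "nat set" and E :: "nat set set" and a b :: nat
  assumes "is_weighted_chromatic W"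
    and "simple_graph V E"
    and "a \<in> V" and "b \<in> V" and "a \<noteq> b"
  shows "W V E unit_weight - W V (switch_ab E a b) unit_weight
       = W V (tilde_ab E a b) unit_weight - W V (tilde'_ab E a b) unit_weight"
proof -
  have dc: "\<And>X. simple_graph V X \<Longrightarrow> {a,b} \<in> X \<Longrightarrow>
     W V X unit_weight = W V (X - {{a, b}}) unit_weight
       + W (V - {b}) (contract_edges X a b) (contract_weight unit_weight a b)"
    using assms(1) unfolding is_weighted_chromatic_def weighted_graph_def by auto
  have nl: "{b} \<notin> E" using noloop[OF assms(2)] .
  have st: "simple_graph V (tilde_ab E a b)" using simple_tilde assms(2-5) .
  have C: "contract_edges (insert {a,b} E) a b = contract_edges (insert {a,b} (tilde_ab E a b)) a b"
    using C_lem assms(5) .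
  have T: "({a,b} \<in> tilde_ab E a b) = ({a,b} \<in> E)" using T_lem assms(5) nl .
  show ?thesis
  proof (cases "{a,b} \<in> E")
    case True
    have e1: "insert {a,b} E = E" using True by auto
    have e2: "insert {a,b} (tilde_ab E a b) = tilde_ab E a b" using True T by auto
    have "W V E unit_weight = W V (E - {{a, b}}) unit_weight
       + W (V - {b}) (contract_edges E a b) (contract_weight unit_weight a b)"
      using dc assms(2) True by blast
    moreover have "W V (tilde_ab E a b) unit_weight = W V (tilde_ab E a b - {{a, b}}) unit_weight
       + W (V - {b}) (contract_edges (tilde_ab E a b) a b) (contract_weight unit_weight a b)"
      using dc st True T by blast
    moreover have "contract_edges E a b = contract_edges (tilde_ab E a b) a b"
      using C e1 e2 by simp
    ultimately show ?thesis using True T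
      unfolding tilde'_ab_def switch_ab_def by simp
  next
    case False
    have s1: "simple_graph V (insert {a,b} E)" using simple_ins assms(2-5) .
    have s2: "simple_graph V (insert {a,b} (tilde_ab E a b))" using simple_ins st assms(3-5) .
    have r1: "insert {a,b} E - {{a,b}} = E" using False by auto
    have r2: "insert {a,b} (tilde_ab E a b) - {{a,b}} = tilde_ab E a b" using False T by auto
    have "W V (insert {a,b} E) unit_weight = W V E unit_weight
       + W (V - {b}) (contract_edges (insert {a,b} E) a b) (contract_weight unit_weight a b)"
      using dc[OF s1] r1 by simp
    moreover have "W V (insert {a,b} (tilde_ab E a b)) unit_weight = W V (tilde_ab E a b) unit_weight
       + W (V - {b}) (contract_edges (insert {a,b} (tilde_ab E a b)) a b) (contract_weight unit_weight a b)"
      using dc[OF s2] r2 by simp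
    ultimately show ?thesis using False T C
      unfolding tilde'_ab_def switch_ab_def by simp
  qed
qed

end
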